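(* Let $n\ge 6$ and let $\mathcal{F}$ be a finite set of graphs. Let $c:\mathcal{G}_n\to\{0,1\}$ be a concept such that, for all $T\ge0$, the graphs of $\mathcal{G}_n$ are not linearly separable under $\overline{\phi^{(T)}_{\mathsf{WL}}}$ with respect to $c$. Assume that every $G\in\mathcal{G}_n$ with $c(G)=0$ has at least one vertex contained in a subgraph of $G$ isomorphic to a graph in $\mathcal{F}$, while no graph $G$ with $c(G)=1$ has such a vertex. Then, for every $T\ge 0$, the graphs of $\mathcal{G}_n$ are linearly separable under $\overline{\phi^{(T)}_{\mathsf{WL},\mathcal{F}}}$ with respect to $c$.
   Context: $\mathcal{G}_n$ is the set of (unlabeled, simple, undirected) graphs on $n$ vertices; "subgraph" means induced subgraph $G[X]$, $X\subseteq V(G)$. $1$-WL: $C^1_0$ constant, $C^1_t(v)=\mathsf{RELABEL}(C^1_{t-1}(v),\{\!\{C^1_{t-1}(u):u\in N(v)\}\!\})$ with a fixed injective $\mathsf{RELABEL}$ shared by all graphs. $1$-WL$_{\mathcal{F}}$: same update with initial colour $(\ell_F(v))_{F\in\mathcal{F}}$, $\ell_F(v)=1$ if $v$ lies in some $X$ with $G[X]$ isomorphic to $F$, else $0$. $\phi_t(G)$ (resp. $\phi_{\mathcal{F},t}(G)$) counts the vertices of $G$ of each colour occurring at round $t$ over $\mathcal{G}_n$; $\phi^{(T)}_{\mathsf{WL}}$, $\phi^{(T)}_{\mathsf{WL},\mathcal{F}}$ are the concatenations over rounds $0,\dots,T$, and the bar denotes normalisation to unit Euclidean norm. Linearly separable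 with respect to $c$: there exist $\mathbf{w},b$ with $\mathbf{w}^\top\mathbf{x}_G+b>0$ when $c(G)=1$ and $<0$ when $c(G)=0$, $\mathbf{x}_G$ the feature vector of $G$. *)

theory Defs
  imports Complex_Main "HOL-Library.Multiset"
begin

text \<open>A labelled simple graph on vertex set {0..<n}: an adjacency predicate.
  Unlabelled graphs are handled by requiring the concept to be isomorphism invariant.\<close>
type_synonym graph = "nat \<Rightarrow> nat \<Rightarrow> bool"

definition wf_graph :: "nat \<Rightarrow> graph \<Rightarrow> bool" where
  "wf_graph n E \<longleftrightarrow> (\<forall>u v. E u v \<longrightarrow> u < n \<and> v < n) \<and> (\<forall>u v. E u v \<longrightarrow> E v u) \<and> (\<forall>v. \<not> E v v)"

definition graphs :: "nat \<Rightarrow> graph set" where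
  "graphs n = {E. wf_graph n E}"

definition graph_iso :: "nat \<Rightarrow> graph \<Rightarrow> graph \<Rightarrow> bool" where
  "graph_iso n G H \<longleftrightarrow> (\<exists>f. bij_betw f {0..<n} {0..<n} \<and>
      (\<forall>u<n. \<forall>v<n. G u v \<longleftrightarrow> H (f u) (f v)))"

definition in_induced_copy :: "nat \<Rightarrow> graph \<Rightarrow> nat \<Rightarrow> graph \<Rightarrow> nat \<Rightarrow> bool" where
  "in_induced_copy k H n G v \<longleftrightarrow> (\<exists>f. inj_on f {0..<k} \<and> f ` {0..<k} \<subseteq> {0..<n} \<and>
      v \<in> f ` {0..<k} \<and> (\<forall>i<k. \<forall>j<k. H i j \<longleftrightarrow> G (f i) (f j)))"

text \<open>Initial label vector (l_F(v))_{F in Fam}, as a function on graphs (indices outside Fam are False).\<close>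
definition sub_label :: "(nat \<times> graph) set \<Rightarrow> nat \<Rightarrow> graph \<Rightarrow> nat \<Rightarrow> (nat \<times> graph) \<Rightarrow> bool" where
  "sub_label Fam n G v = (\<lambda>F. F \<in> Fam \<and> in_induced_copy (fst F) (snd F) n G v)"

text \<open>WL colours: RELABEL is taken to be the (injective) constructor itself.\<close>
datatype 'a wlcol = Init 'a | Step "'a wlcol" "'a wlcol multiset"

fun wl :: "nat \<Rightarrow> (nat \<Rightarrow> 'a) \<Rightarrow> graph \<Rightarrow> nat \<Rightarrow> nat \<Rightarrow> 'a wlcol" where
  "wl n init G 0 v = Init (init v)"
| "wl n init G (Suc t) v = Step (wl n init G t v)
      (image_mset (\<lambda>u. wl n init G t u) (mset_set {u. u < n \<and> G v u}))"

text \<open>Index set of the concatenated feature vector phi^(T): pairs (round t, colour occurring at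
  round t over G_n).\<close>
definition feat_idx :: "nat \<Rightarrow> (graph \<Rightarrow> nat \<Rightarrow> 'a) \<Rightarrow> nat \<Rightarrow> (nat \<times> 'a wlcol) set" where
  "feat_idx n init T = {(t, wl n (init G) G t v) | t G v. t \<le> T \<and> G \<in> graphs n \<and> v < n}"

definition feat :: "nat \<Rightarrow> (graph \<Rightarrow> nat \<Rightarrow> 'a) \<Rightarrow> graph \<Rightarrow> (nat \<times> 'a wlcol) \<Rightarrow> real" where
  "feat n init G i = real (card {v. v < n \<and> wl n (init G) G (fst i) v = snd i})"

definition norm_feat :: "nat \<Rightarrow> (graph \<Rightarrow> nat \<Rightarrow> 'a) \<Rightarrow> nat \<Rightarrow> graph \<Rightarrow> (nat \<times> 'a wlcol) \<Rightarrow> real" where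
  "norm_feat n init T G i = feat n init G i / sqrt (\<Sum>j\<in>feat_idx n init T. (feat n init G j)\<^sup>2)"

definition lin_sep :: "nat \<Rightarrow> 'i set \<Rightarrow> (graph \<Rightarrow> 'i \<Rightarrow> real) \<Rightarrow> (graph \<Rightarrow> bool) \<Rightarrow> bool" where
  "lin_sep n I x c \<longleftrightarrow> (\<exists>(w :: 'i \<Rightarrow> real) (b :: real). \<forall>G\<in>graphs n.
      (c G \<longrightarrow> (\<Sum>i\<in>I. w i * x G i) + b > 0) \<and> (\<not> c G \<longrightarrow> (\<Sum>i\<in>I. w i * x G i) + b < 0))"

definition wl_init :: "graph \<Rightarrow> nat \<Rightarrow> unit" where
  "wl_init G v = ()"

definition wlF_init :: "(nat \<times> graph) set \<Rightarrow> nat \<Rightarrow> graph \<Rightarrow> nat \<Rightarrow> (nat \<times> graph) \<Rightarrow> bool" where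
  "wlF_init Fam n G v = sub_label Fam n G v"

end

theory Submission
  imports Defs
begin

lemma finite_graphs: "finite (graphs n)"
proof -
  have "graphs n \<subseteq> (\<lambda>S u v. (u,v) \<in> S) ` Pow ({..<n}\<times>{..<n})"
  proof
    fix E assume "E \<in> graphs n"
    hence w: "wf_graph n E" by (simp add: graphs_def)
    have "E = (\<lambda>u v. (u,v) \<in> {(u,v). E u v})" by simp
    moreover have "{(u,v). E u v} \<in> Pow ({..<n}\<times>{..<n})" using w by (auto simp: wf_graph_def)
    ultimately show "E \<in> (\<lambda>S u v. (u,v) \<in> S) ` Pow ({..<n}\<times>{..<n})" by blast
  qed
  thus ?thesis by (rule finite_subset) simp
qed

lemma finite_feat_idx: "finite (feat_idx n init T)"
proof -
  have "feat_idx n init T \<subseteq> (\<lambda>(t,G,v). (t, wl n (init G) G t v)) ` ({..T} \<times> graphs n \<times> {..<n})"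
    unfolding feat_idx_def by force
  thus ?thesis by (rule finite_subset) (simp add: finite_graphs)
qed

theorem proposition13:
  fixes n :: nat and Fam :: "(nat \<times> graph) set" and c :: "graph \<Rightarrow> bool"
  assumes "n \<ge> 6"
    and "finite Fam" and "\<forall>F\<in>Fam. wf_graph (fst F) (snd F)"
    and "\<forall>G\<in>graphs n. \<forall>H\<in>graphs n. graph_iso n G H \<longrightarrow> c G = c H"
    and "\<forall>T. \<not> lin_sep n (feat_idx n wl_init T) (norm_feat n wl_init T) c"
    and "\<forall>G\<in>graphs n. \<not> c G \<longrightarrow> (\<exists>v<n. \<exists>F\<in>Fam. in_induced_copy (fst F) (snd F) n G v)"
    and "\<forall>G\<in>graphs n. c G \<longrightarrow> \<not> (\<exists>v<n. \<exists>F\<in>Fam. in_induced_copy (fst F) (snd F) n G v)"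
  shows "\<forall>T. lin_sep n (feat_idx n (wlF_init Fam n) T) (norm_feat n (wlF_init Fam n) T) c"
proof
  fix T
  define init where "init = wlF_init Fam n"
  define I where "I = feat_idx n init T"
  define z :: "(nat \<times> graph) \<Rightarrow> bool" where "z = (\<lambda>F. False)"
  define a where "a = ((0::nat), (Init z :: ((nat \<times> graph) \<Rightarrow> bool) wlcol))"
  define w where "w = (\<lambda>i::nat \<times> ((nat \<times> graph) \<Rightarrow> bool) wlcol.
     if i = a then 1 else if fst i = 0 then - real n else 0)"
  have finI: "finite I" unfolding I_def by (rule finite_feat_idx)
  have n0: "0 < n" using assms(1) by simp
  have w0: "\<And>G v. wl n (init G) G 0 v = Init (sub_label Fam n G v)"
    by (simp add: init_def wlF_init_def)
  have Npos: "sqrt (\<Sum>j\<in>I. (feat n init G j)\<^sup>2) > 0" if G: "G \<in> graphs n" for G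
  proof -
    let ?j = "(0::nat, wl n (init G) G 0 0)"
    have jI: "?j \<in> I" unfolding I_def feat_idx_def using G n0 by blast
    have "card {v. v < n \<and> wl n (init G) G 0 v = wl n (init G) G 0 0} > 0"
      by (rule card_gt_0_iff[THEN iffD2]) (use n0 in auto)
    hence "feat n init G ?j > 0" by (simp add: feat_def)
    hence "(feat n init G ?j)\<^sup>2 > 0" by simp
    moreover have "(feat n init G ?j)\<^sup>2 \<le> (\<Sum>j\<in>I. (feat n init G j)\<^sup>2)"
      using member_le_sum[OF jI _ finI, of "\<lambda>j. (feat n init G j)\<^sup>2"] by simp
    ultimately have "(\<Sum>j\<in>I. (feat n init G j)\<^sup>2) > 0" by linarith
    thus ?thesis by simp
  qed
  have key: "\<forall>G\<in>graphs n. (c G \<longrightarrow> (\<Sum>i\<in>I. w i * feat n init G i) > 0) \<and>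
      (\<not> c G \<longrightarrow> (\<Sum>i\<in>I. w i * feat n init G i) < 0)"
  proof (intro ballI conjI impI)
    fix G assume G: "G \<in> graphs n" and cG: "c G"
    have lab: "\<And>v. v < n \<Longrightarrow> sub_label Fam n G v = z"
      using assms(7) G cG by (auto simp: sub_label_def z_def)
    have aI: "a \<in> I" unfolding I_def feat_idx_def a_def using G n0 w0 lab[of 0] by fastforce
    have "\<And>i. i \<in> I \<Longrightarrow> w i * feat n init G i = (if i = a then real n else 0)"
    proof -
      fix i assume iI: "i \<in> I"
      show "w i * feat n init G i = (if i = a then real n else 0)"
      proof (cases "i = a")
        case True
        have "{v. v < n \<and> wl n (init G) G 0 v = Init z} = {..<n}" using w0 lab by auto
        thus ?thesis using True by (simp add: w_def feat_def a_def)
      next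
        case False
        show ?thesis
        proof (cases "fst i = 0")
          case True
          then obtain l where il: "i = (0, Init l)" using iI unfolding I_def feat_idx_def
            using w0 by auto
          hence "l \<noteq> z" using False a_def by auto
          hence "{v. v < n \<and> wl n (init G) G 0 v = Init l} = {}" using w0 lab by auto
          thus ?thesis using il False by (simp add: feat_def)
        next
          case f: False
          thus ?thesis using False by (simp add: w_def)
        qed
      qed
    qed
    hence "(\<Sum>i\<in>I. w i * feat n init G i) = (\<Sum>i\<in>I. (if i = a then real n else 0))"
      by (rule sum.cong[OF refl])
    also have "\<dots> = real n" using aI finI by simp
    finally show "(\<Sum>i\<in>I. w i * feat n init G i) > 0" using n0 by simp
  next
    fix G assume G: "G \<in> graphs n" and cG: "\<not> c G"
    obtain v0 F where v0: "v0 < n" "F \<in> Fam" "in_induced_copy (fst F) (snd F) n G v0"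
      using assms(6) G cG by blast
    define l0 where "l0 = sub_label Fam n G v0"
    have l0z: "l0 \<noteq> z" using v0 unfolding l0_def sub_label_def z_def fun_eq_iff by (metis prod.collapse)
    define i0 where "i0 = ((0::nat), Init l0)"
    have i0I: "i0 \<in> I" unfolding I_def feat_idx_def i0_def l0_def using G v0(1) w0 by fastforce
    have i0a: "i0 \<noteq> a" using l0z by (simp add: i0_def a_def)
    define h where "h = (\<lambda>i. (if i = a then real n - 1 else 0) + (if i = i0 then - real n else 0))"
    have le: "w i * feat n init G i \<le> h i" if iI: "i \<in> I" for i
    proof (cases "i = a")
      case True
      have "{v. v < n \<and> wl n (init G) G 0 v = Init z} \<subseteq> {..<n} - {v0}"
        using w0 l0z l0_def by auto
      hence "card {v. v < n \<and> wl n (init G) G 0 v = Init z} \<le> card ({..<n} - {v0})"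
        by (intro card_mono) auto
      also have "\<dots> = n - 1" using v0(1) by simp
      finally have "feat n init G a \<le> real n - 1" using n0 unfolding feat_def a_def by simp
      thus ?thesis using True i0a by (simp add: w_def h_def)
    next
      case False
      show ?thesis
      proof (cases "i = i0")
        case True
        have "v0 \<in> {v. v < n \<and> wl n (init G) G 0 v = Init l0}" using v0(1) w0 l0_def by simp
        hence "card {v. v < n \<and> wl n (init G) G 0 v = Init l0} \<ge> 1"
          by (metis (no_types, lifting) One_nat_def Suc_leI card_gt_0_iff empty_iff finite_nat_set_iff_bounded mem_Collect_eq)
        hence "feat n init G i0 \<ge> 1" by (simp add: feat_def i0_def)
        hence "real n * feat n init G i0 \<ge> real n * 1" by (intro mult_left_mono) auto
        thus ?thesis using True i0a by (simp add: w_def h_def i0_def)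
      next
        case f: False
        have "feat n init G i \<ge> 0" by (simp add: feat_def)
        thus ?thesis using False f by (auto simp: w_def h_def)
      qed
    qed
    have "(\<Sum>i\<in>I. w i * feat n init G i) \<le> (\<Sum>i\<in>I. h i)" by (rule sum_mono) (rule le)
    also have "\<dots> = (\<Sum>i\<in>I. (if i = a then real n - 1 else 0)) + (- real n)"
      unfolding h_def sum.distrib using finI i0I by simp
    also have "\<dots> \<le> real n - 1 + (- real n)"
      using finI n0 by (simp add: sum.delta)
    finally show "(\<Sum>i\<in>I. w i * feat n init G i) < 0" by simp
  qed
  show "lin_sep n (feat_idx n (wlF_init Fam n) T) (norm_feat n (wlF_init Fam n) T) c"
    unfolding lin_sep_def
  proof (intro exI[of _ w] exI[of _ 0] ballI)
    fix G assume G: "G \<in> graphs n"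
    have eq: "(\<Sum>i\<in>feat_idx n (wlF_init Fam n) T. w i * norm_feat n (wlF_init Fam n) T G i)
      = (\<Sum>i\<in>I. w i * feat n init G i) / sqrt (\<Sum>j\<in>I. (feat n init G j)\<^sup>2)"
      unfolding norm_feat_def I_def init_def by (simp add: sum_divide_distrib)
    show "(c G \<longrightarrow> (\<Sum>i\<in>feat_idx n (wlF_init Fam n) T. w i * norm_feat n (wlF_init Fam n) T G i) + 0 > 0) \<and>
      (\<not> c G \<longrightarrow> (\<Sum>i\<in>feat_idx n (wlF_init Fam n) T. w i * norm_feat n (wlF_init Fam n) T G i) + 0 < 0)"
      unfolding eq using key G Npos[OF G] by (simp add: divide_pos_pos divide_neg_pos)
  qed
qed

end
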